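(* Every irrevocable (non-wasteful) distribution policy is individually rational with respect to greedy players.
   Context: Players: a finite set $N=\{a_1,\dots,a_n\}$. A characteristic function is $v:2^N\to\mathbb{R}_{\ge 0}$ with $v(\emptyset)=0$, monotone and bounded: $\mathsf{min}\le v(S)\le v(T)\le\mathsf{max}$ for all nonempty $S\subseteq T\subseteq N$, for fixed constants $0<\mathsf{min}\le\mathsf{max}$. Online process: an arrival order is a permutation $\pi=(\pi_1,\dots,\pi_n)$ of $N$; player $\pi_t$ arrives at time $t$. For $S\subseteq N$, $\pi_{|S}$ denotes the players of $S$ in the relative order of $\pi$; $\pi_{|S}$ is a prefix of $\pi_{|T}$ if $S\subseteq T$ and the players of $S$ are the first $|S|$ players of $\pi_{|T}$. Let $C^{t-1}$ be the coalition structure of players arrived before time $t$ ($C^0=\emptyset$). At time $t$, player $\pi_t$ either joins an existing coalition $S\in C^{t-1}$ or forms $\{\pi_t\}$ (choice $S=\emptyset$); decisions are never revised. A distribution policy $\varphi$ assigns to every coalition $S$ with order $\pi_{|S}$ a vector $(\varphi_i(S,\pi_{|S}))_{i\in S}$ with $\sum_{i\in S}\varphi_i=v(S)$. It is irrevocable if for every $\pi$, every $S\subseteq T\subseteq N$ with $\pi_{|S}$ a prefix of $\pi_{|T}$ and every $i\in S$, $\varphi_i(S,\pi_{|S})\le\varphi_i(T,\pi_{|T})$. Greedy players: $\pi_t$ chooses $S\in C^{t-1}\cup\{\emptyset\}$ maximizing $\varphi_{\pi_t}(S\cup\{\pi_t\},\pi_{|S\cup\{\pi_t\}})$ (predetermined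 tie-breaking); $C_g^t$ is the structure after time $t$. Individual rationality: for every $v$ and $\pi$, every $t\le n$, every $S\in C_g^t$ and every $i\in S$, $\varphi_i(S,\pi_{|S})\ge v(\{i\})$. *)

theory Defs
  imports Complex_Main "HOL-Library.Sublist"
begin

definition char_fun :: "'a set \<Rightarrow> ('a set \<Rightarrow> real) \<Rightarrow> real \<Rightarrow> real \<Rightarrow> bool" where
  "char_fun N v mn mx \<longleftrightarrow>
     finite N \<and> 0 < mn \<and> mn \<le> mx \<and> v {} = 0 \<and>
     (\<forall>S\<subseteq>N. 0 \<le> v S) \<and>
     (\<forall>S T. S \<noteq> {} \<and> S \<subseteq> T \<and> T \<subseteq> N \<longrightarrow> mn \<le> v S \<and> v S \<le> v T \<and> v T \<le> mx)"

definition arrival_order :: "'a set \<Rightarrow> 'a list \<Rightarrow> bool" where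
  "arrival_order N \<pi> \<longleftrightarrow> distinct \<pi> \<and> set \<pi> = N"

definition restr :: "'a list \<Rightarrow> 'a set \<Rightarrow> 'a list" where
  "restr \<pi> S = filter (\<lambda>x. x \<in> S) \<pi>"

definition distribution_policy :: "'a set \<Rightarrow> ('a set \<Rightarrow> real) \<Rightarrow> ('a list \<Rightarrow> 'a \<Rightarrow> real) \<Rightarrow> bool" where
  "distribution_policy N v \<phi> \<longleftrightarrow>
     (\<forall>\<pi> S. arrival_order N \<pi> \<and> S \<subseteq> N \<longrightarrow> (\<Sum>i\<in>S. \<phi> (restr \<pi> S) i) = v S)"

definition irrevocable :: "'a set \<Rightarrow> ('a list \<Rightarrow> 'a \<Rightarrow> real) \<Rightarrow> bool" where
  "irrevocable N \<phi> \<longleftrightarrow>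
     (\<forall>\<pi> S T. arrival_order N \<pi> \<and> S \<subseteq> T \<and> T \<subseteq> N \<and> prefix (restr \<pi> S) (restr \<pi> T) \<longrightarrow>
        (\<forall>i\<in>S. \<phi> (restr \<pi> S) i \<le> \<phi> (restr \<pi> T) i))"

text \<open>A run of greedy players: C t is the coalition structure after time t (C 0 = {}).
  At time t+1 the player pi!t joins some S in C t or forms a singleton (S = {}),
  choosing S maximising its own payoff; any admissible (tie-broken) choice is allowed.\<close>
definition greedy_run :: "('a list \<Rightarrow> 'a \<Rightarrow> real) \<Rightarrow> 'a list \<Rightarrow> (nat \<Rightarrow> 'a set set) \<Rightarrow> bool" where
  "greedy_run \<phi> \<pi> C \<longleftrightarrow> C 0 = {} \<and>
     (\<forall>t < length \<pi>. \<exists>S \<in> insert {} (C t).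
        (\<forall>S' \<in> insert {} (C t).
           \<phi> (restr \<pi> (insert (\<pi> ! t) S')) (\<pi> ! t) \<le> \<phi> (restr \<pi> (insert (\<pi> ! t) S)) (\<pi> ! t)) \<and>
        C (Suc t) = insert (insert (\<pi> ! t) S) (C t - {S}))"

definition individually_rational :: "'a set \<Rightarrow> ('a set \<Rightarrow> real) \<Rightarrow> ('a list \<Rightarrow> 'a \<Rightarrow> real) \<Rightarrow> bool" where
  "individually_rational N v \<phi> \<longleftrightarrow>
     (\<forall>\<pi> C. arrival_order N \<pi> \<and> greedy_run \<phi> \<pi> C \<longrightarrow>
        (\<forall>t \<le> length \<pi>. \<forall>S \<in> C t. \<forall>i \<in> S. v {i} \<le> \<phi> (restr \<pi> S) i))"

end

theory Submission
  imports Defs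
begin

lemma restr_prefix:
  assumes d: "distinct \<pi>" and t: "t < length \<pi>" and S: "S \<subseteq> set (take t \<pi>)"
  shows "prefix (restr \<pi> S) (restr \<pi> (insert (\<pi> ! t) S))"
proof -
  have split: "\<pi> = take t \<pi> @ drop t \<pi>" by simp
  have disj: "set (take t \<pi>) \<inter> set (drop t \<pi>) = {}"
    using d by (metis distinct_append split)
  have xnot: "\<pi> ! t \<notin> set (take t \<pi>)"
    using disj t by (metis disjoint_iff Cons_nth_drop_Suc list.set_intros(1))
  have f1: "filter (\<lambda>x. x \<in> S) (drop t \<pi>) = []"
    using disj S by (auto simp: filter_empty_conv)
  have f2: "filter (\<lambda>x. x \<in> insert (\<pi> ! t) S) (take t \<pi>) = filter (\<lambda>x. x \<in> S) (take t \<pi>)"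
    using xnot by (intro filter_cong) auto
  have "restr \<pi> S = filter (\<lambda>x. x \<in> S) (take t \<pi>)"
    unfolding restr_def by (subst split) (simp only: filter_append f1, simp)
  moreover have "restr \<pi> (insert (\<pi> ! t) S) = filter (\<lambda>x. x \<in> S) (take t \<pi>) @
      filter (\<lambda>x. x \<in> insert (\<pi> ! t) S) (drop t \<pi>)"
    unfolding restr_def by (subst split) (simp only: filter_append f2)
  ultimately show ?thesis by simp
qed

theorem proposition2:
  fixes N :: "'a set" and v :: "'a set \<Rightarrow> real" and mn mx :: real
    and \<phi> :: "'a list \<Rightarrow> 'a \<Rightarrow> real"
  assumes "char_fun N v mn mx"
    and "distribution_policy N v \<phi>"
    and "irrevocable N \<phi>"
  shows "individually_rational N v \<phi>"
  unfolding individually_rational_def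
proof (rule allI, rule allI, rule impI)
  fix \<pi> C
  assume h: "arrival_order N \<pi> \<and> greedy_run \<phi> \<pi> C"
  hence ao: "arrival_order N \<pi>" and g: "greedy_run \<phi> \<pi> C" by auto
  have d: "distinct \<pi>" and sN: "set \<pi> = N" using ao by (auto simp: arrival_order_def)
  have single: "\<phi> (restr \<pi> {x}) x = v {x}" if "x \<in> N" for x
  proof -
    have "(\<Sum>i\<in>{x}. \<phi> (restr \<pi> {x}) i) = v {x}"
      using assms(2) ao that unfolding distribution_policy_def by blast
    thus ?thesis by simp
  qed
  have inv: "\<forall>S\<in>C t. S \<subseteq> set (take t \<pi>) \<and> (\<forall>i\<in>S. v {i} \<le> \<phi> (restr \<pi> S) i)"
    if "t \<le> length \<pi>" for t
    using that
  proof (induction t)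
    case 0
    then show ?case using g by (simp add: greedy_run_def)
  next
    case (Suc t)
    hence tl: "t < length \<pi>" by simp
    have IH: "\<forall>S\<in>C t. S \<subseteq> set (take t \<pi>) \<and> (\<forall>i\<in>S. v {i} \<le> \<phi> (restr \<pi> S) i)"
      using Suc by simp
    obtain S0 where S0: "S0 \<in> insert {} (C t)"
      and mx: "\<forall>S' \<in> insert {} (C t).
           \<phi> (restr \<pi> (insert (\<pi> ! t) S')) (\<pi> ! t) \<le> \<phi> (restr \<pi> (insert (\<pi> ! t) S0)) (\<pi> ! t)"
      and Cs: "C (Suc t) = insert (insert (\<pi> ! t) S0) (C t - {S0})"
      using g tl unfolding greedy_run_def by blast
    have S0sub: "S0 \<subseteq> set (take t \<pi>)" using S0 IH by auto
    have S0IR: "\<forall>i\<in>S0. v {i} \<le> \<phi> (restr \<pi> S0) i" using S0 IH by auto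
    have tsub: "set (take t \<pi>) \<subseteq> set (take (Suc t) \<pi>)"
      by (simp add: set_take_subset_set_take)
    have xin: "\<pi> ! t \<in> set (take (Suc t) \<pi>)" using tl by (simp add: take_Suc_conv_app_nth)
    have xN: "\<pi> ! t \<in> N" using tl sN by auto
    have takeN: "set (take t \<pi>) \<subseteq> N" using sN by (metis set_take_subset)
    have newx: "v {\<pi> ! t} \<le> \<phi> (restr \<pi> (insert (\<pi> ! t) S0)) (\<pi> ! t)"
      using mx single[OF xN] by auto
    have pre: "prefix (restr \<pi> S0) (restr \<pi> (insert (\<pi> ! t) S0))"
      by (rule restr_prefix[OF d tl S0sub])
    have newS: "v {i} \<le> \<phi> (restr \<pi> (insert (\<pi> ! t) S0)) i" if "i \<in> S0" for i
    proof -
      have "\<phi> (restr \<pi> S0) i \<le> \<phi> (restr \<pi> (insert (\<pi> ! t) S0)) i"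
        using assms(3) ao pre that S0sub takeN xN unfolding irrevocable_def
        by (metis (no_types, lifting) insert_subset subset_insertI subset_trans)
      thus ?thesis using S0IR that by fastforce
    qed
    show ?case
    proof
      fix S assume "S \<in> C (Suc t)"
      then consider "S = insert (\<pi> ! t) S0" | "S \<in> C t" using Cs by auto
      then show "S \<subseteq> set (take (Suc t) \<pi>) \<and> (\<forall>i\<in>S. v {i} \<le> \<phi> (restr \<pi> S) i)"
      proof cases
        case 1
        then show ?thesis using newx newS S0sub tsub xin by auto
      next
        case 2
        then show ?thesis using IH tsub by blast
      qed
    qed
  qed
  show "\<forall>t\<le>length \<pi>. \<forall>S\<in>C t. \<forall>i\<in>S. v {i} \<le> \<phi> (restr \<pi> S) i"
    using inv by blast
qed

end
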